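(* Let $(K,v)$ be a valued field such that $K$ is not algebraically closed. Then there is a polynomial $F(X,Y)\in K[X,Y]$ such that the set $\{v(F(a,b)) : a,b\in K\}\subseteq\Gamma\cup\{\infty\}$ has no maximal element. In particular, for $K=\mathbb{R}((t))$ with the $t$-adic valuation, $F(X,Y)=X^2+(XY-1)^2$ is such a polynomial.
   Context: $\Gamma$ denotes the value group of $v$, and $v(0)=\infty>\Gamma$. *)

theory Defs
  imports "HOL-Computational_Algebra.Polynomial" "HOL-Computational_Algebra.Formal_Laurent_Series"
begin

text \<open>Extended value group: None plays the role of infinity, above every value.\<close>
fun val_le :: "'g::linorder option \<Rightarrow> 'g option \<Rightarrow> bool" where
  "val_le _ None = True"
| "val_le None (Some _) = False"
| "val_le (Some a) (Some b) = (a \<le> b)"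

fun val_add :: "'g::ordered_ab_group_add option \<Rightarrow> 'g option \<Rightarrow> 'g option" where
  "val_add (Some a) (Some b) = Some (a + b)"
| "val_add _ _ = None"

definition valuation :: "('a::field \<Rightarrow> 'g::linordered_ab_group_add option) \<Rightarrow> bool" where
  "valuation v \<longleftrightarrow>
     (\<forall>x. v x = None \<longleftrightarrow> x = 0) \<and>
     (\<forall>x y. v (x * y) = val_add (v x) (v y)) \<and>
     (\<forall>x y. val_le (v x) (v (x + y)) \<or> val_le (v y) (v (x + y)))"

definition nontrivial_valuation :: "('a::field \<Rightarrow> 'g::linordered_ab_group_add option) \<Rightarrow> bool" where
  "nontrivial_valuation v \<longleftrightarrow> (\<exists>x. x \<noteq> 0 \<and> v x \<noteq> Some 0)"

definition alg_closed :: "'a::field itself \<Rightarrow> bool" where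
  "alg_closed _ \<longleftrightarrow> (\<forall>p :: 'a poly. degree p > 0 \<longrightarrow> (\<exists>x. poly p x = 0))"

text \<open>Bivariate polynomials K[X,Y] represented as (K[X])[Y]; evaluation at (a,b).\<close>
definition eval2 :: "'a::comm_semiring_0 poly poly \<Rightarrow> 'a \<Rightarrow> 'a \<Rightarrow> 'a" where
  "eval2 F a b = poly (map_poly (\<lambda>c. poly c a) F) b"

definition has_max_val :: "'g::linorder option set \<Rightarrow> bool" where
  "has_max_val S \<longleftrightarrow> (\<exists>m\<in>S. \<forall>s\<in>S. val_le s m)"

definition t_adic :: "real fls \<Rightarrow> int option" where
  "t_adic f = (if f = 0 then None else Some (fls_subdegree f))"

text \<open>X^2 + (XY - 1)^2 as an element of (K[X])[Y]:  (X^2+1) - 2X Y + X^2 Y^2.\<close>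
definition F_example :: "'a::comm_ring_1 poly poly" where
  "F_example = [: [:1, 0, 1:], [:0, -2:], [:0, 0, 1:] :]"

end

theory Submission
  imports Defs
begin

definition Fp :: "'a::comm_ring_1 poly \<Rightarrow> 'a poly poly" where
  "Fp p = (\<Sum>i\<le>degree p. [:[:coeff p i:]:] * [:[:0,1:]:]^i * ([:[:0,1:]:] * [:0,1:] - 1)^(degree p - i))"

lemma eval2_alt: "eval2 F a b = poly (poly F [:b:]) a"
  unfolding eval2_def
  by (induct F rule: pCons_induct) (auto simp: map_poly_pCons)

lemma eval_Fp: "eval2 (Fp p) a b = (\<Sum>i\<le>degree p. coeff p i * a^i * (a*b-1)^(degree p - i))"
  by (simp add: eval2_alt Fp_def poly_sum mult.assoc)

lemma N_nonzero_c:
  fixes a c :: "'a::field"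
  assumes "c \<noteq> 0"
  shows "(\<Sum>i\<le>degree p. coeff p i * a^i * c^(degree p - i)) = c^degree p * poly p (a/c)"
proof -
  have "c^degree p * poly p (a/c) = (\<Sum>i\<le>degree p. c^degree p * (coeff p i * (a/c)^i))"
    by (simp add: poly_altdef sum_distrib_left)
  also have "\<dots> = (\<Sum>i\<le>degree p. coeff p i * a^i * c^(degree p - i))"
  proof (rule sum.cong)
    fix i assume "i \<in> {..degree p}"
    hence "i \<le> degree p" by simp
    hence "c^degree p = c^i * c^(degree p - i)" by (simp add: power_add[symmetric])
    thus "c^degree p * (coeff p i * (a/c)^i) = coeff p i * a^i * c^(degree p - i)"
      using assms by (simp add: power_divide field_simps)
  qed simp
  finally show ?thesis by simp
qed

lemma N_zero_c:
  fixes a :: "'a::field"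
  shows "(\<Sum>i\<le>degree p. coeff p i * a^i * 0^(degree p - i)) = lead_coeff p * a^degree p"
proof -
  have "(\<Sum>i\<le>degree p. coeff p i * a^i * 0^(degree p - i))
      = (\<Sum>i\<le>degree p. if i = degree p then coeff p i * a^i else 0)"
    by (rule sum.cong) (auto simp: power_0_left)
  also have "\<dots> = lead_coeff p * a^degree p" by simp
  finally show ?thesis .
qed

lemma val_one:
  assumes A1: "\<forall>x. v x = None \<longleftrightarrow> x = 0" and A2: "\<forall>x y. v (x*y) = val_add (v x) (v y)"
  shows "v (1::'a::field) = Some (0::'g::linordered_ab_group_add)"
proof -
  obtain z where z: "v (1::'a) = Some z" using A1 by (cases "v (1::'a)") auto
  have "v ((1::'a)*1) = val_add (v 1) (v 1)" using A2 by blast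
  hence "Some z = Some (z+z)" using z by simp
  hence "z + z = z" by simp
  thus ?thesis using z by simp
qed

lemma val_pow:
  assumes A1: "\<forall>x. v x = None \<longleftrightarrow> x = 0" and A2: "\<forall>x y. v (x*y) = val_add (v x) (v y)"
    and va: "v (a::'a::field) = Some (ea::'g::linordered_ab_group_add)" and ea: "ea \<ge> 0"
  shows "\<exists>f. v (a^n) = Some f \<and> f \<ge> 0 \<and> (n \<ge> 1 \<longrightarrow> f \<ge> ea)"
proof (induct n)
  case 0 thus ?case using val_one[OF A1 A2] by simp
next
  case (Suc n)
  then obtain f where f: "v (a^n) = Some f" "f \<ge> 0" by blast
  have "v (a^Suc n) = Some (ea + f)" using A2 va f by simp
  thus ?case using f ea by (auto intro: add_nonneg_nonneg add_increasing2)
qed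

lemma general:
  fixes v :: "'a::field \<Rightarrow> 'g::linordered_ab_group_add option"
  assumes A1: "\<forall>x. v x = None \<longleftrightarrow> x = 0" and A2: "\<forall>x y. v (x*y) = val_add (v x) (v y)"
    and vs: "v s = Some e" and e: "e > 0"
    and dp: "degree p > 0" and nr: "\<forall>x. poly p x \<noteq> 0"
  shows "\<not> has_max_val {v (eval2 (Fp p) a b) | a b. True}"
proof
  let ?d = "degree p" and ?l = "lead_coeff p"
  have p0: "p \<noteq> 0" using dp by auto
  hence l0: "?l \<noteq> 0" by simp
  have nz: "eval2 (Fp p) a b \<noteq> 0" for a b
  proof (cases "a*b - 1 = 0")
    case True
    hence "a \<noteq> 0" by auto
    thus ?thesis using True l0 by (simp only: eval_Fp True N_zero_c) simp
  next
    case False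
    thus ?thesis using nr by (simp only: eval_Fp N_nonzero_c[OF False]) simp
  qed
  have atinv: "eval2 (Fp p) a (inverse a) = ?l * a^?d" if "a \<noteq> 0" for a
  proof -
    have "a * inverse a - 1 = 0" using that by simp
    thus ?thesis by (simp only: eval_Fp N_zero_c)
  qed
  assume "has_max_val {v (eval2 (Fp p) a b) | a b. True}"
  then obtain m where m1: "m \<in> {v (eval2 (Fp p) a b) | a b. True}"
     and m2: "\<forall>s\<in>{v (eval2 (Fp p) a b) | a b. True}. val_le s m"
    unfolding has_max_val_def by blast
  from m1 obtain a0 b0 where m: "m = v (eval2 (Fp p) a0 b0)" by blast
  have mx: "\<forall>a b. val_le (v (eval2 (Fp p) a b)) (v (eval2 (Fp p) a0 b0))"
    using m2 m by blast
  define y where "y = eval2 (Fp p) a0 b0"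
  have y0: "y \<noteq> 0" using nz y_def by simp
  define w where "w = y / ?l"
  have w0: "w \<noteq> 0" using y0 l0 w_def by simp
  obtain h where h: "v w = Some h" using A1 w0 by (cases "v w") auto
  obtain l where l: "v ?l = Some l" using A1 l0 by (cases "v ?l") auto
  have yw: "y = ?l * w" using l0 w_def by simp
  have vy: "v y = Some (l + h)" using A2 yw l h by simp
  obtain a ea where a0: "a \<noteq> 0" and va: "v a = Some ea" and ea0: "ea > 0" and eah: "ea > h"
  proof (cases "h \<ge> 0")
    case True
    have "v (w*s) = Some (h + e)" using A2 h vs by simp
    moreover have "w * s \<noteq> 0" using w0 A1[rule_format, of s] vs by auto
    moreover have "h + e > 0" "h + e > h" using True e by (auto simp: add_nonneg_pos)
    ultimately show ?thesis using that by blast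
  next
    case False
    have "s \<noteq> 0" using A1[rule_format, of s] vs by auto
    thus ?thesis using that[of s e] vs e False by auto
  qed
  obtain f where f: "v (a^?d) = Some f" "f \<ge> ea"
    using val_pow[OF A1 A2 va] ea0 dp by (metis less_imp_le less_one not_le)
  have "v (eval2 (Fp p) a (inverse a)) = Some (l + f)"
    using atinv[OF a0] A2 l f by simp
  hence "val_le (Some (l+f)) (Some (l+h))" using mx vy y_def by metis
  hence "f \<le> h" by simp
  thus False using f eah by simp
qed

lemma not_sq_neg1: "(x::real fls) * x \<noteq> -1"
proof
  assume xx: "x * x = -1"
  hence x0: "x \<noteq> 0" by auto
  have "fls_subdegree (x*x) = 0" using xx by simp
  hence sd: "fls_subdegree x = 0" using x0 by simp
  have "fls_nth (x*x) (fls_subdegree x + fls_subdegree x) = fls_nth x 0 * fls_nth x 0"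
    by (rule trans[OF fls_times_base]) (simp add: sd)
  hence "fls_nth x 0 * fls_nth x 0 = -1" using xx sd by simp
  moreover have "fls_nth x 0 * fls_nth x 0 \<ge> 0" by simp
  ultimately show False by linarith
qed

theorem mainTheorem4:
  fixes v :: "'a::field \<Rightarrow> 'g::linordered_ab_group_add option"
  assumes "valuation v"
    and "nontrivial_valuation v"
    and "\<not> alg_closed TYPE('a)"
  shows "(\<exists>F :: 'a poly poly. \<not> has_max_val {v (eval2 F a b) | a b. True})
       \<and> \<not> has_max_val {t_adic (eval2 F_example a b) | a b. True}"
proof
  have A1: "\<forall>x. v x = None \<longleftrightarrow> x = 0" and A2: "\<forall>x y. v (x*y) = val_add (v x) (v y)"
    using assms(1) unfolding valuation_def by auto
  obtain p :: "'a poly" where dp: "degree p > 0" and nr: "\<forall>x. poly p x \<noteq> 0"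
    using assms(3) unfolding alg_closed_def by auto
  obtain x where x0: "x \<noteq> 0" and vx: "v x \<noteq> Some 0"
    using assms(2) unfolding nontrivial_valuation_def by auto
  obtain e0 where e0: "v x = Some e0" using A1 x0 by (cases "v x") auto
  have e00: "e0 \<noteq> 0" using vx e0 by auto
  obtain s e where vs: "v s = Some e" and e: "e > 0"
  proof (cases "e0 > 0")
    case True thus ?thesis using that e0 by blast
  next
    case False
    hence neg: "e0 < 0" using e00 by simp
    have "inverse x \<noteq> 0" using x0 by simp
    then obtain ei where ei: "v (inverse x) = Some ei" using A1 by (cases "v (inverse x)") auto
    have "v (x * inverse x) = Some (e0 + ei)" using A2 e0 ei by simp
    hence "e0 + ei = 0" using x0 val_one[OF A1 A2] by simp
    hence "ei > 0" using neg by (simp add: add_eq_0_iff2)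
    thus ?thesis using that ei by blast
  qed
  show "\<exists>F :: 'a poly poly. \<not> has_max_val {v (eval2 F a b) | a b. True}"
    using general[OF A1 A2 vs e dp nr] by blast
next
  have B1: "\<forall>x. t_adic x = None \<longleftrightarrow> x = 0" by (simp add: t_adic_def)
  have B2: "\<forall>x y. t_adic (x*y) = val_add (t_adic x) (t_adic y)"
    by (simp add: t_adic_def)
  have vX: "t_adic fls_X = Some 1" by (simp add: t_adic_def)
  have dp: "degree [:1::real fls,0,1:] > 0" by simp
  have nr: "\<forall>x. poly [:1::real fls,0,1:] x \<noteq> 0"
  proof
    fix x :: "real fls"
    have "1 + x * x \<noteq> 0" using not_sq_neg1[of x] by (metis add.commute add_eq_0_iff)
    thus "poly [:1,0,1:] x \<noteq> 0" by (simp add: algebra_simps)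
  qed
  have eq: "eval2 F_example a b = eval2 (Fp [:1::real fls,0,1:]) a b" for a b
  proof -
    have "eval2 (Fp [:1::real fls,0,1:]) a b = a*a + (a*b-1)*(a*b-1)"
    proof -
      have d: "degree [:1::real fls,0,1:] = 2" by simp
      have c2: "coeff [:1::real fls,0,1:] 2 = 1" by (simp add: numeral_2_eq_2)
      have "{..2::nat} = {0,1,2}" by auto
      thus ?thesis using c2 by (simp only: eval_Fp d) (simp add: power2_eq_square)
    qed
    moreover have "eval2 F_example a b = a*a + (a*b-1)*(a*b-1)"
      by (simp add: eval2_alt F_example_def) (simp add: algebra_simps)
    ultimately show ?thesis by simp
  qed
  show "\<not> has_max_val {t_adic (eval2 F_example a b) | a b. True}"
    using general[OF B1 B2 vX _ dp nr] eq by simp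
qed

end
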